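(* Let $X$, $(Y,d_Y)$, $(Z,d_Z)$ be Polish (metric) spaces, $M$ a set, and $P: X \rightsquigarrow Y$, $Q: Y \rightsquigarrow Z$ tight Feller kernels. For $\mu \in \mathcal{P}(Y)$ write $\mu Q = \int Q(y,\cdot)\,d\mu(y)$, and assume $W_1(\mu Q, \nu Q) \le L\, W_1(\mu,\nu)$ for all $\mu,\nu \in \mathcal{P}(Y)$. Then for any $\delta, \epsilon \ge 0$ and any relation $R \subseteq X \times M$, $$Q_{!W}^\epsilon(P_{!W}^\delta R) \subseteq (Q \circ P)_{!W}^{L\delta+\epsilon} R.$$
   Context: $W_1(\mu,\nu) = \inf_{\pi \in \Pi(\mu,\nu)} \int d(y,y')\,d\pi(y,y')$ (possibly $+\infty$). Composite kernel: $(Q \circ P)(x) = P(x)Q$, i.e. $(Q\circ P)(x,C) = \int Q(y,C)\,P(x,dy)$. Wasserstein pushforward of a relation: $P_{!W}^\delta R = \{(\nu,m) \in \mathcal{P}(Y) \times M : \exists x,\ (x,m) \in R,\ W_1(P(x),\nu) \le \delta\}$. For a set $\mathcal{M} \subseteq \mathcal{P}(Y) \times M$, $Q_{!W}^\epsilon \mathcal{M} = \{(\gamma,m) \in \mathcal{P}(Z) \times M : \exists \nu,\ (\nu,m) \in \mathcal{M},\ W_1(\nu Q, \gamma) \le \epsilon\}$; for $R \subseteq X \times M$, $(Q\circ P)_{!W}^\eta R = \{(\gamma,m) : \exists x,\ (x,m) \in R,\ W_1((Q\circ P)(x), \gamma) \le \eta\}$. *)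

theory Defs
  imports "HOL-Probability.Probability"
begin

definition Prob :: "'a::topological_space measure set" where
  "Prob = {\<mu>. prob_space \<mu> \<and> sets \<mu> = sets borel}"

definition couplings :: "'a::topological_space measure \<Rightarrow> 'b::topological_space measure \<Rightarrow> ('a \<times> 'b) measure set" where
  "couplings \<mu> \<nu> = {\<pi>. prob_space \<pi> \<and> sets \<pi> = sets borel \<and>
      distr \<pi> borel fst = \<mu> \<and> distr \<pi> borel snd = \<nu>}"

definition W1 :: "'a::metric_space measure \<Rightarrow> 'a measure \<Rightarrow> ennreal" where
  "W1 \<mu> \<nu> = (INF \<pi>\<in>couplings \<mu> \<nu>. \<integral>\<^sup>+ p. ennreal (dist (fst p) (snd p)) \<partial>\<pi>)"

definition markov_kernel :: "('a::topological_space \<Rightarrow> 'b::topological_space measure) \<Rightarrow> bool" where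
  "markov_kernel P \<longleftrightarrow> P \<in> borel \<rightarrow>\<^sub>M prob_algebra borel"

definition feller :: "('a::topological_space \<Rightarrow> 'b::topological_space measure) \<Rightarrow> bool" where
  "feller P \<longleftrightarrow> (\<forall>f :: 'b \<Rightarrow> real. continuous_on UNIV f \<and> bounded (range f) \<longrightarrow>
      continuous_on UNIV (\<lambda>x. \<integral>y. f y \<partial>P x))"

definition tight_kernel :: "('a \<Rightarrow> 'b::topological_space measure) \<Rightarrow> bool" where
  "tight_kernel P \<longleftrightarrow> (\<forall>x. \<forall>e>0. \<exists>K. compact K \<and> measure (P x) (UNIV - K) \<le> e)"

definition comp_kernel :: "('b \<Rightarrow> 'c measure) \<Rightarrow> ('a \<Rightarrow> 'b measure) \<Rightarrow> 'a \<Rightarrow> 'c measure" where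
  "comp_kernel Q P = (\<lambda>x. Giry_Monad.bind (P x) Q)"

definition kernel_push_W :: "('a \<Rightarrow> 'b::metric_space measure) \<Rightarrow> real \<Rightarrow> ('a \<times> 'm) set \<Rightarrow> ('b measure \<times> 'm) set" where
  "kernel_push_W P \<delta> R = {(\<nu>, m). \<nu> \<in> Prob \<and> (\<exists>x. (x, m) \<in> R \<and> W1 (P x) \<nu> \<le> ennreal \<delta>)}"

definition meas_push_W :: "('b \<Rightarrow> 'c::metric_space measure) \<Rightarrow> real \<Rightarrow> ('b measure \<times> 'm) set \<Rightarrow> ('c measure \<times> 'm) set" where
  "meas_push_W Q \<epsilon> \<M> = {(\<gamma>, m). \<gamma> \<in> Prob \<and> (\<exists>\<nu>. (\<nu>, m) \<in> \<M> \<and> W1 (Giry_Monad.bind \<nu> Q) \<gamma> \<le> ennreal \<epsilon>)}"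

end

theory Submission
  imports Defs
begin

lemma partition_exists:
  fixes \<eta> :: real
  assumes "\<eta> > 0"
  shows "\<exists>k::'a::{metric_space,second_countable_topology} \<Rightarrow> nat.
     k \<in> borel \<rightarrow>\<^sub>M count_space UNIV \<and> (\<forall>a b. k a = k b \<longrightarrow> dist a b \<le> \<eta>)"
proof -
  obtain D :: "'a set" where "countable D" and D: "\<And>X. open X \<Longrightarrow> X \<noteq> {} \<Longrightarrow> \<exists>d\<in>D. d \<in> X"
    by (erule countable_dense_setE)
  define s where "s = from_nat_into D"
  have ex: "\<exists>n. dist (s n) b < \<eta>/2" for b
  proof -
    obtain d where "d \<in> D" "d \<in> ball b (\<eta>/2)"
      using D[of "ball b (\<eta>/2)"] assms by auto
    then have "s (to_nat_on D d) = d" using \<open>countable D\<close> by (simp add: s_def)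
    with \<open>d \<in> ball b (\<eta>/2)\<close> show ?thesis by (metis dist_commute mem_ball)
  qed
  define k where "k b = (LEAST n. dist (s n) b < \<eta>/2)" for b
  have km: "k \<in> borel \<rightarrow>\<^sub>M count_space UNIV"
    unfolding k_def by measurable
  have kd: "dist (s (k b)) b < \<eta>/2" for b
    unfolding k_def by (rule LeastI_ex[OF ex])
  have "k a = k b \<longrightarrow> dist a b \<le> \<eta>" for a b
  proof
    assume "k a = k b"
    then have "dist a b \<le> dist (s (k a)) a + dist (s (k a)) b"
      by (metis dist_triangle3)
    also have "\<dots> < \<eta>" using kd[of a] kd[of b] \<open>k a = k b\<close> by simp
    finally show "dist a b \<le> \<eta>" by simp
  qed
  with km show ?thesis by blast
qed

lemma glue:
  fixes \<mu> \<nu> \<gamma> :: "'a::{metric_space,second_countable_topology} measure"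
  assumes c1: "\<pi>1 \<in> couplings \<mu> \<nu>" and c2: "\<pi>2 \<in> couplings \<nu> \<gamma>" and "\<eta> > 0"
  shows "W1 \<mu> \<gamma> \<le> (\<integral>\<^sup>+p. ennreal (dist (fst p) (snd p)) \<partial>\<pi>1) + (\<integral>\<^sup>+p. ennreal (dist (fst p) (snd p)) \<partial>\<pi>2) + ennreal \<eta>"
proof -
  obtain k :: "'a \<Rightarrow> nat" where km[measurable]: "k \<in> borel \<rightarrow>\<^sub>M count_space UNIV"
    and kd: "\<And>a b. k a = k b \<Longrightarrow> dist a b \<le> \<eta>"
    using partition_exists[OF \<open>\<eta> > 0\<close>] by blast
  have ps1: "prob_space \<pi>1" and s1: "sets \<pi>1 = sets borel" and m11: "distr \<pi>1 borel fst = \<mu>"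
    and m12: "distr \<pi>1 borel snd = \<nu>" using c1 by (auto simp: couplings_def)
  have ps2: "prob_space \<pi>2" and s2: "sets \<pi>2 = sets borel" and m21: "distr \<pi>2 borel fst = \<nu>"
    and m22: "distr \<pi>2 borel snd = \<gamma>" using c2 by (auto simp: couplings_def)
  interpret p1: prob_space \<pi>1 by (rule ps1)
  interpret p2: prob_space \<pi>2 by (rule ps2)
  interpret pp: pair_prob_space \<pi>1 \<pi>2 by unfold_locales
  have s1': "sets \<pi>1 = sets (borel \<Otimes>\<^sub>M borel)" using s1 by (simp only: borel_prod)
  have s2': "sets \<pi>2 = sets (borel \<Otimes>\<^sub>M borel)" using s2 by (simp only: borel_prod)
  have sp1: "space \<pi>1 = UNIV" using sets_eq_imp_space_eq[OF s1] by simp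
  have sp2: "space \<pi>2 = UNIV" using sets_eq_imp_space_eq[OF s2] by simp
  have sPi: "sets (\<pi>1 \<Otimes>\<^sub>M \<pi>2) = sets ((borel \<Otimes>\<^sub>M borel) \<Otimes>\<^sub>M (borel \<Otimes>\<^sub>M borel))"
    using s1' s2' by (rule sets_pair_measure_cong)
  have spPi: "space (\<pi>1 \<Otimes>\<^sub>M \<pi>2) = UNIV" by (simp add: space_pair_measure sp1 sp2)
  define A where "A n = {b. k b = n}" for n
  define c where "c n = inverse (emeasure \<nu> (A n))" for n
  define h where "h n = c n * emeasure \<nu> (A n)" for n
  define w where "w z = (if k (snd (fst z)) = k (fst (snd z)) then c (k (snd (fst z))) else 0)"
    for z :: "('a \<times> 'a) \<times> ('a \<times> 'a)"
  have [measurable]: "Measurable.pred ((borel \<Otimes>\<^sub>M borel) \<Otimes>\<^sub>M (borel \<Otimes>\<^sub>M borel)) (\<lambda>z::('a \<times> 'a) \<times> ('a \<times> 'a). k (snd (fst z)) = k (fst (snd z)))"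
  proof -
    have f1: "(\<lambda>z::('a \<times> 'a) \<times> ('a \<times> 'a). k (snd (fst z))) \<in> (borel \<Otimes>\<^sub>M borel) \<Otimes>\<^sub>M (borel \<Otimes>\<^sub>M borel) \<rightarrow>\<^sub>M count_space UNIV"
      by (rule measurable_compose[OF _ km]) measurable
    have f2: "(\<lambda>z::('a \<times> 'a) \<times> ('a \<times> 'a). k (fst (snd z))) \<in> (borel \<Otimes>\<^sub>M borel) \<Otimes>\<^sub>M (borel \<Otimes>\<^sub>M borel) \<rightarrow>\<^sub>M count_space UNIV"
      by (rule measurable_compose[OF _ km]) measurable
    have g1: "(\<lambda>z::('a \<times> 'a) \<times> ('a \<times> 'a). k (snd (fst z))) \<in> borel_measurable ((borel \<Otimes>\<^sub>M borel) \<Otimes>\<^sub>M (borel \<Otimes>\<^sub>M borel))"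
      by (rule measurable_compose[OF f1]) simp
    have g2: "(\<lambda>z::('a \<times> 'a) \<times> ('a \<times> 'a). k (fst (snd z))) \<in> borel_measurable ((borel \<Otimes>\<^sub>M borel) \<Otimes>\<^sub>M (borel \<Otimes>\<^sub>M borel))"
      by (rule measurable_compose[OF f2]) simp
    show ?thesis unfolding pred_def by (rule measurable_equality_set[OF g1 g2])
  qed
  have [measurable]: "c \<in> count_space UNIV \<rightarrow>\<^sub>M borel" by simp
  have wm: "w \<in> borel_measurable (\<pi>1 \<Otimes>\<^sub>M \<pi>2)"
    unfolding measurable_cong_sets[OF sPi refl] w_def by measurable
  have psnu: "prob_space \<nu>"
    unfolding m12[symmetric] by (rule p1.prob_space_distr) (simp add: measurable_cong_sets[OF s1' refl])
  have nuA: "emeasure \<nu> (A n) \<le> 1" for n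
    using psnu by (rule prob_space.emeasure_le_1)
  have An[measurable]: "A n \<in> sets borel" for n
    using measurable_sets[OF km, of "{n}"] by (simp add: A_def vimage_def)
  have snu: "sets \<nu> = sets borel" using m12[symmetric] by simp
  have emA1: "emeasure \<pi>2 {q. k (fst q) = n} = emeasure \<nu> (A n)" for n
  proof -
    have "emeasure \<nu> (A n) = emeasure (distr \<pi>2 borel fst) (A n)" using m21 by simp
    also have "\<dots> = emeasure \<pi>2 (fst -` A n \<inter> space \<pi>2)"
      by (rule emeasure_distr) (simp_all add: measurable_cong_sets[OF s2' refl])
    finally show ?thesis by (simp add: sp2 A_def vimage_def)
  qed
  have emA2: "emeasure \<pi>1 {p. k (snd p) = n} = emeasure \<nu> (A n)" for n
  proof -
    have "emeasure \<nu> (A n) = emeasure (distr \<pi>1 borel snd) (A n)" using m12 by simp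
    also have "\<dots> = emeasure \<pi>1 (snd -` A n \<inter> space \<pi>1)"
      by (rule emeasure_distr) (simp_all add: measurable_cong_sets[OF s1' refl])
    finally show ?thesis by (simp add: sp1 A_def vimage_def)
  qed
  have setq: "{q. k (fst q) = n} \<in> sets \<pi>2" for n
  proof -
    have "Measurable.pred (borel \<Otimes>\<^sub>M borel) (\<lambda>q::'a\<times>'a. k (fst q) = n)" by measurable
    then show ?thesis by (simp add: s2' pred_def space_pair_measure)
  qed
  have setp: "{p. k (snd p) = n} \<in> sets \<pi>1" for n
  proof -
    have "Measurable.pred (borel \<Otimes>\<^sub>M borel) (\<lambda>q::'a\<times>'a. k (snd q) = n)" by measurable
    then show ?thesis by (simp add: s1' pred_def space_pair_measure)
  qed
  have inner1: "(\<integral>\<^sup>+q. F * w (p, q) \<partial>\<pi>2) = F * h (k (snd p))" for p F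
  proof -
    have "(\<lambda>q. F * w (p, q)) = (\<lambda>q. (F * c (k (snd p))) * indicator {q. k (fst q) = k (snd p)} q)"
      by (auto simp: w_def fun_eq_iff split: split_indicator)
    then have "(\<integral>\<^sup>+q. F * w (p, q) \<partial>\<pi>2) = (F * c (k (snd p))) * emeasure \<pi>2 {q. k (fst q) = k (snd p)}"
      using nn_integral_cmult_indicator[OF setq] by simp
    then show ?thesis by (simp add: emA1 h_def mult.assoc)
  qed
  have inner2: "(\<integral>\<^sup>+p. G * w (p, q) \<partial>\<pi>1) = G * h (k (fst q))" for q G
  proof -
    have "(\<lambda>p. G * w (p, q)) = (\<lambda>p. (G * c (k (fst q))) * indicator {p. k (snd p) = k (fst q)} p)"
      by (auto simp: w_def fun_eq_iff split: split_indicator)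
    then have "(\<integral>\<^sup>+p. G * w (p, q) \<partial>\<pi>1) = (G * c (k (fst q))) * emeasure \<pi>1 {p. k (snd p) = k (fst q)}"
      using nn_integral_cmult_indicator[OF setp] by simp
    then show ?thesis by (simp add: emA2 h_def mult.assoc)
  qed
  have h01: "h n = (if emeasure \<nu> (A n) = 0 then 0 else 1)" for n
  proof (cases "emeasure \<nu> (A n) = 0")
    case True then show ?thesis by (simp add: h_def)
  next
    case False
    have "emeasure \<nu> (A n) < top" using nuA[of n]
      by (metis ennreal_one_less_top le_less_trans)
    then show ?thesis using False
      using ennreal_divide_self[of "emeasure \<nu> (A n)"]
      by (simp add: h_def c_def divide_ennreal_def mult.commute)
  qed
  have hle: "h n \<le> 1" for n by (simp add: h01)
  have AEnu: "AE b in \<nu>. h (k b) = 1"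
  proof -
    have "AE b in \<nu>. \<forall>n. k b = n \<longrightarrow> h n = 1"
    proof (subst AE_all_countable, intro allI)
      fix n
      show "AE b in \<nu>. k b = n \<longrightarrow> h n = 1"
      proof (cases "emeasure \<nu> (A n) = 0")
        case True
        then have "A n \<in> null_sets \<nu>" using An[of n] snu by (simp add: null_sets_def)
        from AE_not_in[OF this] show ?thesis by eventually_elim (simp add: A_def)
      next
        case False then show ?thesis by (simp add: h01)
      qed
    qed
    then show ?thesis by eventually_elim simp
  qed
  have hkm[measurable]: "(\<lambda>b. h (k b)) \<in> borel_measurable borel"
    by (rule measurable_compose[OF km]) simp
  have AE1: "AE p in \<pi>1. h (k (snd p)) = 1"
  proof -
    have "AE b in distr \<pi>1 borel snd. h (k b) = 1" unfolding m12 by (rule AEnu)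
    then show ?thesis
      by (subst (asm) AE_distr_iff) (simp_all add: measurable_cong_sets[OF s1' refl])
  qed
  have AE2: "AE q in \<pi>2. h (k (fst q)) = 1"
  proof -
    have "AE b in distr \<pi>2 borel fst. h (k b) = 1" unfolding m21 by (rule AEnu)
    then show ?thesis
      by (subst (asm) AE_distr_iff) (simp_all add: measurable_cong_sets[OF s2' refl])
  qed
  have I1: "(\<integral>\<^sup>+z. F (fst z) * w z \<partial>(\<pi>1 \<Otimes>\<^sub>M \<pi>2)) = (\<integral>\<^sup>+p. F p * h (k (snd p)) \<partial>\<pi>1)"
    if Fm[measurable]: "F \<in> borel_measurable (borel \<Otimes>\<^sub>M borel)" for F :: "'a \<times> 'a \<Rightarrow> ennreal"
  proof -
    have "(\<lambda>z. F (fst z) * w z) \<in> borel_measurable (\<pi>1 \<Otimes>\<^sub>M \<pi>2)"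
      using wm unfolding measurable_cong_sets[OF sPi refl] by measurable
    then have "(\<integral>\<^sup>+z. F (fst z) * w z \<partial>(\<pi>1 \<Otimes>\<^sub>M \<pi>2)) = (\<integral>\<^sup>+p. \<integral>\<^sup>+q. F p * w (p, q) \<partial>\<pi>2 \<partial>\<pi>1)"
      by (subst p2.nn_integral_fst[symmetric]) simp_all
    also have "\<dots> = (\<integral>\<^sup>+p. F p * h (k (snd p)) \<partial>\<pi>1)" by (simp add: inner1)
    finally show ?thesis .
  qed
  have I2: "(\<integral>\<^sup>+z. G (snd z) * w z \<partial>(\<pi>1 \<Otimes>\<^sub>M \<pi>2)) = (\<integral>\<^sup>+q. G q * h (k (fst q)) \<partial>\<pi>2)"
    if Gm[measurable]: "G \<in> borel_measurable (borel \<Otimes>\<^sub>M borel)" for G :: "'a \<times> 'a \<Rightarrow> ennreal"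
  proof -
    have "(\<lambda>z. G (snd z) * w z) \<in> borel_measurable (\<pi>1 \<Otimes>\<^sub>M \<pi>2)"
      using wm unfolding measurable_cong_sets[OF sPi refl] by measurable
    then have "(\<integral>\<^sup>+z. G (snd z) * w z \<partial>(\<pi>1 \<Otimes>\<^sub>M \<pi>2)) = (\<integral>\<^sup>+q. \<integral>\<^sup>+p. G q * w (p, q) \<partial>\<pi>1 \<partial>\<pi>2)"
      by (subst pp.nn_integral_snd[symmetric]) simp_all
    also have "\<dots> = (\<integral>\<^sup>+q. G q * h (k (fst q)) \<partial>\<pi>2)" by (simp add: inner2)
    finally show ?thesis .
  qed
  have psmu: "prob_space \<mu>"
    unfolding m11[symmetric] by (rule p1.prob_space_distr) (simp add: measurable_cong_sets[OF s1' refl])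
  have smu: "sets \<mu> = sets borel" using m11[symmetric] by simp
  have sgam: "sets \<gamma> = sets borel" using m22[symmetric] by simp
  define \<phi> where "\<phi> z = (fst (fst z), snd (snd z))" for z :: "('a \<times> 'a) \<times> ('a \<times> 'a)"
  have sb: "sets (borel :: ('a \<times> 'a) measure) = sets (borel \<Otimes>\<^sub>M borel)" by (simp only: borel_prod)
  have phim: "\<phi> \<in> (\<pi>1 \<Otimes>\<^sub>M \<pi>2) \<rightarrow>\<^sub>M borel"
    unfolding measurable_cong_sets[OF sPi sb] \<phi>_def by measurable
  have phim': "\<phi> \<in> density (\<pi>1 \<Otimes>\<^sub>M \<pi>2) w \<rightarrow>\<^sub>M borel"
    using phim by (simp add: measurable_cong_sets[OF sets_density refl])
  define \<sigma> where "\<sigma> = distr (density (\<pi>1 \<Otimes>\<^sub>M \<pi>2) w) borel \<phi>"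
  have ssig: "sets \<sigma> = sets borel" by (simp add: \<sigma>_def)
  have spsig: "space \<sigma> = UNIV" by (simp add: \<sigma>_def)
  have int\<sigma>: "(\<integral>\<^sup>+x. g x \<partial>\<sigma>) = (\<integral>\<^sup>+z. w z * g (\<phi> z) \<partial>(\<pi>1 \<Otimes>\<^sub>M \<pi>2))"
    if gm: "g \<in> borel_measurable borel" for g :: "'a \<times> 'a \<Rightarrow> ennreal"
  proof -
    have "(\<integral>\<^sup>+x. g x \<partial>\<sigma>) = (\<integral>\<^sup>+z. g (\<phi> z) \<partial>density (\<pi>1 \<Otimes>\<^sub>M \<pi>2) w)"
      unfolding \<sigma>_def by (rule nn_integral_distr[OF phim']) (simp add: gm)
    also have "\<dots> = (\<integral>\<^sup>+z. w z * g (\<phi> z) \<partial>(\<pi>1 \<Otimes>\<^sub>M \<pi>2))"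
      by (rule nn_integral_density[OF wm measurable_compose[OF phim gm]])
    finally show ?thesis .
  qed
  have intfst: "(\<integral>\<^sup>+x. g (fst x) \<partial>\<sigma>) = (\<integral>\<^sup>+x. g x \<partial>\<mu>)"
    if gm[measurable]: "g \<in> borel_measurable borel" for g :: "'a \<Rightarrow> ennreal"
  proof -
    have gf[measurable]: "(\<lambda>x::'a\<times>'a. g (fst x)) \<in> borel_measurable borel"
      unfolding measurable_cong_sets[OF sb refl] by measurable
    have "(\<integral>\<^sup>+x. g (fst x) \<partial>\<sigma>) = (\<integral>\<^sup>+z. g (fst (fst z)) * w z \<partial>(\<pi>1 \<Otimes>\<^sub>M \<pi>2))"
      by (subst int\<sigma>[OF gf]) (simp add: \<phi>_def mult.commute)
    also have "\<dots> = (\<integral>\<^sup>+p. g (fst p) * h (k (snd p)) \<partial>\<pi>1)"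
      by (rule I1[of "\<lambda>p. g (fst p)"]) measurable
    also have "\<dots> = (\<integral>\<^sup>+p. g (fst p) \<partial>\<pi>1)"
      by (rule nn_integral_cong_AE) (use AE1 in eventually_elim, simp)
    also have "\<dots> = (\<integral>\<^sup>+x. g x \<partial>distr \<pi>1 borel fst)"
      by (rule nn_integral_distr[symmetric]) (simp_all add: measurable_cong_sets[OF s1' refl])
    finally show ?thesis by (simp add: m11)
  qed
  have intsnd: "(\<integral>\<^sup>+x. g (snd x) \<partial>\<sigma>) = (\<integral>\<^sup>+x. g x \<partial>\<gamma>)"
    if gm[measurable]: "g \<in> borel_measurable borel" for g :: "'a \<Rightarrow> ennreal"
  proof -
    have gf[measurable]: "(\<lambda>x::'a\<times>'a. g (snd x)) \<in> borel_measurable borel"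
      unfolding measurable_cong_sets[OF sb refl] by measurable
    have "(\<integral>\<^sup>+x. g (snd x) \<partial>\<sigma>) = (\<integral>\<^sup>+z. g (snd (snd z)) * w z \<partial>(\<pi>1 \<Otimes>\<^sub>M \<pi>2))"
      by (subst int\<sigma>[OF gf]) (simp add: \<phi>_def mult.commute)
    also have "\<dots> = (\<integral>\<^sup>+q. g (snd q) * h (k (fst q)) \<partial>\<pi>2)"
      by (rule I2[of "\<lambda>p. g (snd p)"]) measurable
    also have "\<dots> = (\<integral>\<^sup>+q. g (snd q) \<partial>\<pi>2)"
      by (rule nn_integral_cong_AE) (use AE2 in eventually_elim, simp)
    also have "\<dots> = (\<integral>\<^sup>+x. g x \<partial>distr \<pi>2 borel snd)"
      by (rule nn_integral_distr[symmetric]) (simp_all add: measurable_cong_sets[OF s2' refl])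
    finally show ?thesis by (simp add: m22)
  qed
  have pssig: "prob_space \<sigma>"
  proof (rule prob_spaceI)
    have "emeasure \<sigma> (space \<sigma>) = (\<integral>\<^sup>+x. (\<lambda>_. 1) (fst x) \<partial>\<sigma>)" by simp
    also have "\<dots> = (\<integral>\<^sup>+x. 1 \<partial>\<mu>)" by (rule intfst) simp
    also have "\<dots> = 1" using prob_space.emeasure_space_1[OF psmu] by simp
    finally show "emeasure \<sigma> (space \<sigma>) = 1" .
  qed
  have mg1: "distr \<sigma> borel fst = \<mu>"
  proof (rule measure_eqI)
    show "sets (distr \<sigma> borel fst) = sets \<mu>" by (simp add: smu)
    fix S assume "S \<in> sets (distr \<sigma> borel fst)"
    then have S[measurable]: "S \<in> sets borel" by simp
    have fm: "fst \<in> \<sigma> \<rightarrow>\<^sub>M borel"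
      unfolding measurable_cong_sets[OF ssig refl] measurable_cong_sets[OF sb refl] by measurable
    have "emeasure (distr \<sigma> borel fst) S = (\<integral>\<^sup>+x. indicator S x \<partial>distr \<sigma> borel fst)" by simp
    also have "\<dots> = (\<integral>\<^sup>+x. indicator S (fst x) \<partial>\<sigma>)" by (rule nn_integral_distr[OF fm]) simp
    also have "\<dots> = (\<integral>\<^sup>+x. indicator S x \<partial>\<mu>)" by (rule intfst) simp
    also have "\<dots> = emeasure \<mu> S" using S smu by simp
    finally show "emeasure (distr \<sigma> borel fst) S = emeasure \<mu> S" .
  qed
  have mg2: "distr \<sigma> borel snd = \<gamma>"
  proof (rule measure_eqI)
    show "sets (distr \<sigma> borel snd) = sets \<gamma>" by (simp add: sgam)
    fix S assume "S \<in> sets (distr \<sigma> borel snd)"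
    then have S[measurable]: "S \<in> sets borel" by simp
    have fm: "snd \<in> \<sigma> \<rightarrow>\<^sub>M borel"
      unfolding measurable_cong_sets[OF ssig refl] measurable_cong_sets[OF sb refl] by measurable
    have "emeasure (distr \<sigma> borel snd) S = (\<integral>\<^sup>+x. indicator S x \<partial>distr \<sigma> borel snd)" by simp
    also have "\<dots> = (\<integral>\<^sup>+x. indicator S (snd x) \<partial>\<sigma>)" by (rule nn_integral_distr[OF fm]) simp
    also have "\<dots> = (\<integral>\<^sup>+x. indicator S x \<partial>\<gamma>)" by (rule intsnd) simp
    also have "\<dots> = emeasure \<gamma> S" using S sgam by simp
    finally show "emeasure (distr \<sigma> borel snd) S = emeasure \<gamma> S" .
  qed
  have csig: "\<sigma> \<in> couplings \<mu> \<gamma>"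
    using pssig ssig mg1 mg2 by (simp add: couplings_def)
  define D where "D p = ennreal (dist (fst p) (snd p))" for p :: "'a \<times> 'a"
  have Dm[measurable]: "D \<in> borel_measurable borel"
    unfolding D_def measurable_cong_sets[OF sb refl] by measurable
  have wm'[measurable]: "w \<in> borel_measurable ((borel \<Otimes>\<^sub>M borel) \<Otimes>\<^sub>M (borel \<Otimes>\<^sub>M borel))"
    using wm unfolding measurable_cong_sets[OF sPi refl] .
  have dfm: "(\<lambda>z. D (fst z)) \<in> borel_measurable ((borel \<Otimes>\<^sub>M borel) \<Otimes>\<^sub>M (borel \<Otimes>\<^sub>M borel))"
    by (rule measurable_compose[OF _ Dm]) (simp add: measurable_cong_sets[OF refl sb])
  have dsm: "(\<lambda>z. D (snd z)) \<in> borel_measurable ((borel \<Otimes>\<^sub>M borel) \<Otimes>\<^sub>M (borel \<Otimes>\<^sub>M borel))"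
    by (rule measurable_compose[OF _ Dm]) (simp add: measurable_cong_sets[OF refl sb])
  have m1: "(\<lambda>z. D (fst z) * w z) \<in> borel_measurable (\<pi>1 \<Otimes>\<^sub>M \<pi>2)"
    unfolding measurable_cong_sets[OF sPi refl] by (rule borel_measurable_times_ennreal[OF dfm wm'])
  have m2: "(\<lambda>z. ennreal \<eta> * w z) \<in> borel_measurable (\<pi>1 \<Otimes>\<^sub>M \<pi>2)"
    unfolding measurable_cong_sets[OF sPi refl] by (rule borel_measurable_times_ennreal[OF _ wm']) simp
  have m3: "(\<lambda>z. D (snd z) * w z) \<in> borel_measurable (\<pi>1 \<Otimes>\<^sub>M \<pi>2)"
    unfolding measurable_cong_sets[OF sPi refl] by (rule borel_measurable_times_ennreal[OF dsm wm'])
  have "W1 \<mu> \<gamma> \<le> (\<integral>\<^sup>+x. D x \<partial>\<sigma>)"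
    unfolding W1_def D_def by (rule INF_lower[OF csig])
  also have "\<dots> = (\<integral>\<^sup>+z. w z * D (\<phi> z) \<partial>(\<pi>1 \<Otimes>\<^sub>M \<pi>2))" by (rule int\<sigma>[OF Dm])
  also have "\<dots> \<le> (\<integral>\<^sup>+z. D (fst z) * w z + (ennreal \<eta> * w z + D (snd z) * w z) \<partial>(\<pi>1 \<Otimes>\<^sub>M \<pi>2))"
  proof (rule nn_integral_mono)
    fix z :: "('a \<times> 'a) \<times> ('a \<times> 'a)"
    show "w z * D (\<phi> z) \<le> D (fst z) * w z + (ennreal \<eta> * w z + D (snd z) * w z)"
    proof (cases "k (snd (fst z)) = k (fst (snd z))")
      case True
      then have e: "dist (snd (fst z)) (fst (snd z)) \<le> \<eta>" by (rule kd)
      have "dist (fst (fst z)) (snd (snd z)) \<le> dist (fst (fst z)) (snd (fst z)) + dist (snd (fst z)) (fst (snd z)) + dist (fst (snd z)) (snd (snd z))"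
        using dist_triangle[of "fst (fst z)" "snd (snd z)" "snd (fst z)"]
          dist_triangle[of "snd (fst z)" "snd (snd z)" "fst (snd z)"] by linarith
      then have "dist (fst (fst z)) (snd (snd z)) \<le> dist (fst (fst z)) (snd (fst z)) + \<eta> + dist (fst (snd z)) (snd (snd z))"
        using e by linarith
      then have "D (\<phi> z) \<le> D (fst z) + ennreal \<eta> + D (snd z)"
        unfolding D_def \<phi>_def using \<open>\<eta> > 0\<close>
        by (simp add: ennreal_plus[symmetric] del: ennreal_plus)
      then have "w z * D (\<phi> z) \<le> w z * (D (fst z) + ennreal \<eta> + D (snd z))"
        by (rule mult_left_mono) simp
      then show ?thesis by (simp add: algebra_simps)
    next
      case False then show ?thesis by (simp add: w_def)
    qed
  qed
  also have "\<dots> = (\<integral>\<^sup>+z. D (fst z) * w z \<partial>(\<pi>1 \<Otimes>\<^sub>M \<pi>2)) + ((\<integral>\<^sup>+z. ennreal \<eta> * w z \<partial>(\<pi>1 \<Otimes>\<^sub>M \<pi>2)) + (\<integral>\<^sup>+z. D (snd z) * w z \<partial>(\<pi>1 \<Otimes>\<^sub>M \<pi>2)))"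
    using m1 m2 m3 by (simp add: nn_integral_add)
  also have "\<dots> \<le> (\<integral>\<^sup>+p. D p \<partial>\<pi>1) + (ennreal \<eta> + (\<integral>\<^sup>+p. D p \<partial>\<pi>2))"
  proof (intro add_mono)
    have "(\<integral>\<^sup>+z. D (fst z) * w z \<partial>(\<pi>1 \<Otimes>\<^sub>M \<pi>2)) = (\<integral>\<^sup>+p. D p * h (k (snd p)) \<partial>\<pi>1)"
      by (rule I1) (simp add: measurable_cong_sets[OF sb[symmetric] refl])
    also have "\<dots> \<le> (\<integral>\<^sup>+p. D p \<partial>\<pi>1)"
      by (rule nn_integral_mono) (metis hle mult.right_neutral mult_left_mono zero_le)
    finally show "(\<integral>\<^sup>+z. D (fst z) * w z \<partial>(\<pi>1 \<Otimes>\<^sub>M \<pi>2)) \<le> (\<integral>\<^sup>+p. D p \<partial>\<pi>1)" .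
    have "(\<integral>\<^sup>+z. D (snd z) * w z \<partial>(\<pi>1 \<Otimes>\<^sub>M \<pi>2)) = (\<integral>\<^sup>+p. D p * h (k (fst p)) \<partial>\<pi>2)"
      by (rule I2) (simp add: measurable_cong_sets[OF sb[symmetric] refl])
    also have "\<dots> \<le> (\<integral>\<^sup>+p. D p \<partial>\<pi>2)"
      by (rule nn_integral_mono) (metis hle mult.right_neutral mult_left_mono zero_le)
    finally show "(\<integral>\<^sup>+z. D (snd z) * w z \<partial>(\<pi>1 \<Otimes>\<^sub>M \<pi>2)) \<le> (\<integral>\<^sup>+p. D p \<partial>\<pi>2)" .
    have "(\<integral>\<^sup>+z. (\<lambda>_. ennreal \<eta>) (fst z) * w z \<partial>(\<pi>1 \<Otimes>\<^sub>M \<pi>2)) = (\<integral>\<^sup>+p. ennreal \<eta> * h (k (snd p)) \<partial>\<pi>1)"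
      by (rule I1) simp
    also have "\<dots> \<le> (\<integral>\<^sup>+p. ennreal \<eta> \<partial>\<pi>1)"
      by (rule nn_integral_mono) (metis hle mult.right_neutral mult_left_mono zero_le)
    also have "\<dots> = ennreal \<eta>" by (simp add: p1.emeasure_space_1)
    finally show "(\<integral>\<^sup>+z. ennreal \<eta> * w z \<partial>(\<pi>1 \<Otimes>\<^sub>M \<pi>2)) \<le> ennreal \<eta>" by simp
  qed
  finally show ?thesis by (simp add: D_def ac_simps)
qed


lemma W1_triangle:
  fixes \<mu> \<nu> \<gamma> :: "'a::{metric_space,second_countable_topology} measure"
  shows "W1 \<mu> \<gamma> \<le> W1 \<mu> \<nu> + W1 \<nu> \<gamma>"
proof (rule ennreal_le_epsilon)
  fix e :: real assume fin: "W1 \<mu> \<nu> + W1 \<nu> \<gamma> < top" and e: "0 < e"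
  have a: "W1 \<mu> \<nu> < top" and b: "W1 \<nu> \<gamma> < top" using fin by auto
  have e3: "0 < e/3" using e by simp
  have lt: "x < x + ennreal (e/3)" if "x < top" for x :: ennreal
    using that e3 by (cases x) (auto simp: ennreal_plus[symmetric] ennreal_less_iff simp del: ennreal_plus)
  obtain \<pi>1 where p1: "\<pi>1 \<in> couplings \<mu> \<nu>"
    and c1: "(\<integral>\<^sup>+p. ennreal (dist (fst p) (snd p)) \<partial>\<pi>1) < W1 \<mu> \<nu> + ennreal (e/3)"
    using lt[OF a] unfolding W1_def by (auto simp: INF_less_iff)
  obtain \<pi>2 where p2: "\<pi>2 \<in> couplings \<nu> \<gamma>"
    and c2: "(\<integral>\<^sup>+p. ennreal (dist (fst p) (snd p)) \<partial>\<pi>2) < W1 \<nu> \<gamma> + ennreal (e/3)"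
    using lt[OF b] unfolding W1_def by (auto simp: INF_less_iff)
  have "W1 \<mu> \<gamma> \<le> (\<integral>\<^sup>+p. ennreal (dist (fst p) (snd p)) \<partial>\<pi>1) + (\<integral>\<^sup>+p. ennreal (dist (fst p) (snd p)) \<partial>\<pi>2) + ennreal (e/3)"
    by (rule glue[OF p1 p2 e3])
  also have "\<dots> \<le> (W1 \<mu> \<nu> + ennreal (e/3)) + (W1 \<nu> \<gamma> + ennreal (e/3)) + ennreal (e/3)"
    using c1 c2 by (intro add_mono) auto
  also have "\<dots> = W1 \<mu> \<nu> + W1 \<nu> \<gamma> + (ennreal (e/3) + ennreal (e/3) + ennreal (e/3))"
    by (simp add: ac_simps)
  also have "ennreal (e/3) + ennreal (e/3) + ennreal (e/3) = ennreal e"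
    using e3 by (simp add: ennreal_plus[symmetric] del: ennreal_plus)
  finally show "W1 \<mu> \<gamma> \<le> W1 \<mu> \<nu> + W1 \<nu> \<gamma> + ennreal e" .
qed


theorem mainTheorem19:
  fixes P :: "'x::polish_space \<Rightarrow> 'y::polish_space measure"
    and Q :: "'y \<Rightarrow> 'z::polish_space measure"
    and R :: "('x \<times> 'm) set"
    and L \<delta> \<epsilon> :: real
  assumes "markov_kernel P" "feller P" "tight_kernel P"
    and "markov_kernel Q" "feller Q" "tight_kernel Q"
    and "0 \<le> L"
    and "\<And>\<mu> \<nu>. \<mu> \<in> Prob \<Longrightarrow> \<nu> \<in> Prob \<Longrightarrow>
           W1 (Giry_Monad.bind \<mu> Q) (Giry_Monad.bind \<nu> Q) \<le> ennreal L * W1 \<mu> \<nu>"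
    and "0 \<le> \<delta>" "0 \<le> \<epsilon>"
  shows "meas_push_W Q \<epsilon> (kernel_push_W P \<delta> R) \<subseteq> kernel_push_W (comp_kernel Q P) (L * \<delta> + \<epsilon>) R"
proof
  fix gm assume "gm \<in> meas_push_W Q \<epsilon> (kernel_push_W P \<delta> R)"
  then obtain \<gamma> m \<nu> x where gm: "gm = (\<gamma>, m)" and g: "\<gamma> \<in> Prob" and nu: "\<nu> \<in> Prob"
    and xm: "(x, m) \<in> R" and d1: "W1 (P x) \<nu> \<le> ennreal \<delta>"
    and d2: "W1 (Giry_Monad.bind \<nu> Q) \<gamma> \<le> ennreal \<epsilon>"
    unfolding meas_push_W_def kernel_push_W_def by auto
  have "P x \<in> space (prob_algebra borel)"
    using assms(1) unfolding markov_kernel_def by (rule measurable_space) simp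
  then have Px: "P x \<in> Prob" by (simp add: Prob_def space_prob_algebra)
  have "W1 (comp_kernel Q P x) \<gamma> \<le> W1 (Giry_Monad.bind (P x) Q) (Giry_Monad.bind \<nu> Q) + W1 (Giry_Monad.bind \<nu> Q) \<gamma>"
    unfolding comp_kernel_def by (rule W1_triangle)
  also have "\<dots> \<le> ennreal L * W1 (P x) \<nu> + ennreal \<epsilon>"
    by (intro add_mono assms(8) Px nu d2)
  also have "\<dots> \<le> ennreal L * ennreal \<delta> + ennreal \<epsilon>"
    by (intro add_mono mult_left_mono d1) simp_all
  also have "\<dots> = ennreal (L * \<delta> + \<epsilon>)"
    using assms(7,9,10) by (simp add: ennreal_mult ennreal_plus)
  finally show "gm \<in> kernel_push_W (comp_kernel Q P) (L * \<delta> + \<epsilon>) R"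
    unfolding gm kernel_push_W_def using g xm by auto
qed

end
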